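(* Let $w=(w_1,\dots,w_n)$ be a random vector with i.i.d. symmetrically distributed components having finite moments $\mathbb{E}[w_1^m]=c_m$ (so $c_0=1$, $c_1=0$). Let $m_1,\dots,m_l$ ($l\le n$) be non-negative integers with $\sum_{i=1}^l m_i$ even, and let $z\in\{0,1\}$ be a random binary variable whose conditional law satisfies $P(z=1\mid w)=1-P(z=1\mid -w)$, i.e. $\pi(-w)=1-\pi(w)$ for $\pi(w):=P(z=1\mid w)$. Then $$\mathbb{E}\Big[\prod_{i=1}^l w_i^{m_i}\,z\Big]=\frac{\prod_{i=1}^l c_{m_i}}{2}.$$ *)

theory Defs
  imports "HOL-Probability.Probability"
begin

text \<open>The random vector w = (w_1,...,w_n), realised (0-indexed) as the map
  omega |-> (lambda i in {..<n}. W i omega), valued in PiM {..<n} (lambda _. borel).\<close>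
definition rvec :: "nat \<Rightarrow> (nat \<Rightarrow> 'a \<Rightarrow> real) \<Rightarrow> 'a \<Rightarrow> (nat \<Rightarrow> real)" where
  "rvec n W = (\<lambda>\<omega>. \<lambda>i\<in>{..<n}. W i \<omega>)"

end

theory Submission
  imports Defs
begin
lemma prod_cut:
  fixes h :: "nat \<Rightarrow> nat \<Rightarrow> 'b::comm_monoid_mult"
  assumes "l \<le> n" "\<And>i. h i 0 = 1"
  shows "(\<Prod>i<n. h i (if i < l then m i else 0)) = (\<Prod>i<l. h i (m i))"
  using assms(1)
proof (induction n)
  case 0 then show ?case by simp
next
  case (Suc n)
  show ?case
  proof (cases "l = Suc n")
    case True
    then show ?thesis by (intro prod.cong) auto
  next
    case False
    then have "l \<le> n" using Suc.prems by simp
    then show ?thesis using Suc.IH assms(2) by simp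
  qed
qed
lemma sum_cut:
  assumes "l \<le> (n::nat)"
  shows "(\<Sum>i<n. (if i < l then m i else 0::nat)) = (\<Sum>i<l. m i)"
  using assms
proof (induction n)
  case 0 then show ?case by simp
next
  case (Suc n)
  show ?case
  proof (cases "l = Suc n")
    case True
    then show ?thesis by (intro sum.cong) auto
  next
    case False
    then have "l \<le> n" using Suc.prems by simp
    then show ?thesis using Suc.IH by simp
  qed
qed

lemma neg_prod:
  fixes x :: "nat \<Rightarrow> 'b::comm_ring_1"
  assumes "even (\<Sum>i\<in>I. k i)" "finite I"
  shows "(\<Prod>i\<in>I. (- x i) ^ k i) = (\<Prod>i\<in>I. x i ^ k i)"
proof -
  have "(\<Prod>i\<in>I. (- x i) ^ k i) = (\<Prod>i\<in>I. (-1) ^ k i * x i ^ k i)"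
    by (simp add: power_minus[of "x i" for i])
  also have "\<dots> = (-1) ^ (\<Sum>i\<in>I. k i) * (\<Prod>i\<in>I. x i ^ k i)"
    by (simp only: prod.distrib power_sum)
  finally show ?thesis using assms by simp
qed

theorem proposition1:
  fixes M :: "'a measure" and \<mu> :: "real measure"
    and n l :: nat and W :: "nat \<Rightarrow> 'a \<Rightarrow> real" and z :: "'a \<Rightarrow> real"
    and c :: "nat \<Rightarrow> real" and m :: "nat \<Rightarrow> nat"
    and \<pi> :: "(nat \<Rightarrow> real) \<Rightarrow> real"
  assumes "prob_space M"
    and "prob_space \<mu>" and "sets \<mu> = sets borel"
    and sym: "distr \<mu> borel uminus = \<mu>"
    and moments: "\<And>k. integrable \<mu> (\<lambda>x. x ^ k)"
    and c_def: "\<And>k. c k = (\<integral>x. x ^ k \<partial>\<mu>)"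
    and rv: "\<And>i. i < n \<Longrightarrow> W i \<in> borel_measurable M"
    and ident: "\<And>i. i < n \<Longrightarrow> distr M borel (W i) = \<mu>"
    and indep: "prob_space.indep_vars M (\<lambda>_. borel) W {..<n}"
    and l_le: "l \<le> n"
    and even_sum: "even (\<Sum>i<l. m i)"
    and z_meas: "z \<in> borel_measurable M"
    and z_bin: "\<And>\<omega>. \<omega> \<in> space M \<Longrightarrow> z \<omega> \<in> {0, 1}"
    and \<pi>_meas: "\<pi> \<in> borel_measurable (PiM {..<n} (\<lambda>_. borel))"
    and \<pi>_cond: "AE \<omega> in M. real_cond_exp M
                     (vimage_algebra (space M) (rvec n W) (PiM {..<n} (\<lambda>_. borel))) z \<omega>
                   = \<pi> (rvec n W \<omega>)"
    and \<pi>_sym: "\<And>x. x \<in> space (PiM {..<n} (\<lambda>_. borel)) \<Longrightarrow>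
                   \<pi> (\<lambda>i\<in>{..<n}. - x i) = 1 - \<pi> x"
  shows "(\<integral>\<omega>. (\<Prod>i<l. W i \<omega> ^ m i) * z \<omega> \<partial>M) = (\<Prod>i<l. c (m i)) / 2"
proof -
  interpret M: prob_space M by fact
  interpret mu: prob_space \<mu> by fact
  define P where "P = PiM {..<n} (\<lambda>_. borel :: real measure)"
  define N where "N = PiM {..<n} (\<lambda>_. \<mu>)"
  define X where "X = rvec n W"
  define F where "F = vimage_algebra (space M) X P"
  define m' where "m' i = (if i < l then m i else 0)" for i
  define g where "g x = (\<Prod>i<n. x i ^ m' i)" for x :: "nat \<Rightarrow> real"
  interpret PS: product_prob_space "\<lambda>_::nat. \<mu>"
    by (simp add: product_prob_space_def product_prob_space_axioms_def
        product_sigma_finite_def mu.prob_space_axioms mu.sigma_finite_measure_axioms)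
  have setsN: "sets N = sets P"
    unfolding N_def P_def by (rule sets_PiM_cong) (auto simp: assms(3))
  have spaceN: "space N = space P" using setsN sets_eq_imp_space_eq by blast
  have X_meas: "X \<in> measurable M P"
    unfolding X_def P_def rvec_def by (intro measurable_restrict) (auto intro: rv)
  have g_meas: "g \<in> borel_measurable P"
    unfolding g_def P_def by measurable
  have distrX: "distr M P X = N"
  proof (cases "n = 0")
    case True
    interpret D: prob_space "distr M P X" by (rule M.prob_space_distr[OF X_meas])
    interpret NP: prob_space N unfolding N_def by (rule prob_space_PiM) (simp add: mu.prob_space_axioms)
    have sp: "space P = {\<lambda>_. undefined}" unfolding P_def True by (simp add: space_PiM)
    show ?thesis
    proof (rule measure_eqI)
      show "sets (distr M P X) = sets N" using setsN by simp
      fix A assume A: "A \<in> sets (distr M P X)"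
      then have "A \<subseteq> space P" using sets.sets_into_space by fastforce
      then have "A = {} \<or> A = space P" using sp by auto
      then show "emeasure (distr M P X) A = emeasure N A"
      proof
        assume "A = space P"
        then show ?thesis using D.emeasure_space_1 NP.emeasure_space_1 spaceN by simp
      qed simp
    qed
  next
    case False
    have "distr M P X = PiM {..<n} (\<lambda>i. distr M borel (W i))"
      using M.indep_vars_iff_distr_eq_PiM'[where I="{..<n}" and M'="\<lambda>_. borel" and X=W] False indep rv
      unfolding P_def X_def rvec_def by auto
    also have "\<dots> = N" unfolding N_def by (rule PiM_cong) (auto simp: ident)
    finally show ?thesis .
  qed

  interpret NP: prob_space N unfolding N_def by (rule prob_space_PiM) (simp add: mu.prob_space_axioms)
  have gN[measurable]: "g \<in> borel_measurable N" using g_meas measurable_cong_sets[OF setsN refl] by blast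
  have piN[measurable]: "\<pi> \<in> borel_measurable N" using \<pi>_meas measurable_cong_sets[OF setsN refl] unfolding P_def by blast
  have c0: "c 0 = 1" using c_def[of 0] mu.prob_space by simp
  have int_pow: "\<And>i. i \<in> {..<n} \<Longrightarrow> integrable \<mu> (\<lambda>y. y ^ m' i)" using moments by blast
  have g_int: "integrable N g"
    unfolding N_def g_def by (rule PS.product_integrable_prod[where f="\<lambda>i y. y ^ m' i", simplified]) (auto intro: moments)
  have "integral\<^sup>L N g = (\<Prod>i<n. c (m' i))"
    unfolding N_def g_def c_def by (rule PS.product_integral_prod[where f="\<lambda>i y. y ^ m' i", simplified]) (auto intro: moments)
  also have "\<dots> = (\<Prod>i<l. c (m i))"
    unfolding m'_def by (rule prod_cut[where h="\<lambda>i k. c k"]) (auto simp: l_le c0)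
  finally have g_integral: "integral\<^sup>L N g = (\<Prod>i<l. c (m i))" .
  define neg where "neg = compose {..<n} (uminus :: real \<Rightarrow> real)"
  have umeas: "(uminus :: real \<Rightarrow> real) \<in> measurable \<mu> \<mu>"
    by (subst measurable_cong_sets[OF assms(3) assms(3)]) simp
  have "distr N N neg = PiM {..<n} (\<lambda>i. distr \<mu> \<mu> uminus)"
    unfolding N_def neg_def
    by (rule distr_PiM_finite_prob_space) (auto simp: umeas PS.product_prob_space_axioms)
  also have "\<dots> = N" unfolding N_def
  proof (rule PiM_cong)
    fix i show "distr \<mu> \<mu> uminus = \<mu>"
      using sym distr_cong[OF refl assms(3), where f=uminus and g=uminus] by simp
  qed simp
  finally have distr_neg: "distr N N neg = N" .
  have neg_app: "neg x = (\<lambda>i\<in>{..<n}. - x i)" for x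
    unfolding neg_def compose_def by simp
  have neg_meas: "neg \<in> measurable N N"
  proof -
    have "(\<lambda>x. \<lambda>i\<in>{..<n}. - x i) \<in> measurable N N"
      unfolding N_def
    proof (rule measurable_restrict)
      fix i assume "i \<in> {..<n}"
      then have "(\<lambda>x. x i) \<in> measurable (PiM {..<n} (\<lambda>_. \<mu>)) \<mu>" by simp
      from measurable_compose[OF this umeas] show "(\<lambda>x. - x i) \<in> measurable (PiM {..<n} (\<lambda>_. \<mu>)) \<mu>" .
    qed
    then show ?thesis by (simp add: neg_app[abs_def])
  qed
  have g_neg: "g (neg x) = g x" for x
  proof -
    have "g (neg x) = (\<Prod>i<n. (- x i) ^ m' i)" unfolding g_def neg_app by simp
    also have "\<dots> = g x" unfolding g_def
    proof (rule neg_prod)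
      have "(\<Sum>i<n. m' i) = (\<Sum>i<l. m i)"
        unfolding m'_def using l_le by (rule sum_cut)
      then show "even (\<Sum>i<n. m' i)" using even_sum by simp
    qed simp
    finally show ?thesis .
  qed
  have subalg: "subalgebra M F"
    unfolding subalgebra_def F_def
  proof
    show "space (vimage_algebra (space M) X P) = space M" by simp
    show "sets (vimage_algebra (space M) X P) \<subseteq> sets M"
      using X_meas by (auto simp: sets_vimage_algebra2 measurable_space measurable_sets)
  qed
  interpret FS: finite_measure_subalgebra M F
    by unfold_locales (rule subalg)
  define ce where "ce = real_cond_exp M F z"
  have z01: "\<And>\<omega>. \<omega> \<in> space M \<Longrightarrow> 0 \<le> z \<omega> \<and> z \<omega> \<le> 1"
    using z_bin by fastforce
  have z_int: "integrable M z"
    by (rule M.integrable_const_bound[where B=1]) (use z01 z_meas in \<open>auto intro!: AE_I2\<close>)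
  have ce_pos: "AE \<omega> in M. 0 \<le> ce \<omega>" unfolding ce_def
    by (rule FS.real_cond_exp_pos) (use z01 z_meas in \<open>auto intro!: AE_I2\<close>)
  have "AE \<omega> in M. ce \<omega> \<le> real_cond_exp M F (\<lambda>_. 1) \<omega>" unfolding ce_def
    by (rule FS.real_cond_exp_mono) (use z01 z_int in \<open>auto intro!: AE_I2\<close>)
  moreover have "AE \<omega> in M. real_cond_exp M F (\<lambda>_. 1) \<omega> = 1"
    by (rule FS.real_cond_exp_F_meas) auto
  ultimately have ce_le: "AE \<omega> in M. ce \<omega> \<le> 1" by eventually_elim auto
  have pi_eq: "AE \<omega> in M. ce \<omega> = \<pi> (X \<omega>)" using \<pi>_cond unfolding ce_def F_def X_def P_def .
  have pi_bd: "AE \<omega> in M. norm (\<pi> (X \<omega>)) \<le> 1" using ce_pos ce_le pi_eq by auto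
  have XN: "X \<in> measurable M N" using X_meas measurable_cong_sets[OF refl setsN] by blast
  have distrXN: "distr M N X = N"
    using distrX distr_cong[OF refl setsN[symmetric], where f=X and g=X] by simp
  have G_int: "integrable M (\<lambda>\<omega>. g (X \<omega>))"
    using g_int integrable_distr_eq[OF XN gN] distrXN by simp
  have Gpi_int: "integrable M (\<lambda>\<omega>. g (X \<omega>) * \<pi> (X \<omega>))"
  proof (rule Bochner_Integration.integrable_bound[OF G_int])
    show "(\<lambda>\<omega>. g (X \<omega>) * \<pi> (X \<omega>)) \<in> borel_measurable M" using XN by measurable
    show "AE \<omega> in M. norm (g (X \<omega>) * \<pi> (X \<omega>)) \<le> norm (g (X \<omega>))"
      using pi_bd by eventually_elim (auto simp: abs_mult intro: mult_left_le)
  qed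
  have gpi_int: "integrable N (\<lambda>x. g x * \<pi> x)"
    using Gpi_int integrable_distr_eq[OF XN, of "\<lambda>x. g x * \<pi> x"] distrXN by simp
  have Gz_int: "integrable M (\<lambda>\<omega>. g (X \<omega>) * z \<omega>)"
  proof (rule Bochner_Integration.integrable_bound[OF G_int])
    show "(\<lambda>\<omega>. g (X \<omega>) * z \<omega>) \<in> borel_measurable M" using XN z_meas by measurable
    show "AE \<omega> in M. norm (g (X \<omega>) * z \<omega>) \<le> norm (g (X \<omega>))"
      using z01 by (auto simp: abs_mult intro!: AE_I2 mult_left_le)
  qed
  have GF: "(\<lambda>\<omega>. g (X \<omega>)) \<in> borel_measurable F"
  proof -
    have "X \<in> measurable F P" unfolding F_def
      by (rule measurable_vimage_algebra1) (intro funcsetI measurable_space[OF X_meas])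
    then show ?thesis using g_meas by measurable
  qed
  have "(\<integral>\<omega>. (\<Prod>i<l. W i \<omega> ^ m i) * z \<omega> \<partial>M) = (\<integral>\<omega>. g (X \<omega>) * z \<omega> \<partial>M)"
  proof (rule Bochner_Integration.integral_cong[OF refl])
    fix \<omega> assume "\<omega> \<in> space M"
    have "g (X \<omega>) = (\<Prod>i<n. W i \<omega> ^ m' i)" unfolding g_def X_def rvec_def by simp
    also have "\<dots> = (\<Prod>i<l. W i \<omega> ^ m i)"
      unfolding m'_def by (rule prod_cut[where h="\<lambda>i k. W i \<omega> ^ k"]) (auto simp: l_le)
    finally show "(\<Prod>i<l. W i \<omega> ^ m i) * z \<omega> = g (X \<omega>) * z \<omega>" by simp
  qed
  also have "\<dots> = (\<integral>\<omega>. g (X \<omega>) * ce \<omega> \<partial>M)"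
    unfolding ce_def by (rule FS.real_cond_exp_intg(2)[symmetric]) (use Gz_int GF z_meas in auto)
  also have "\<dots> = (\<integral>\<omega>. g (X \<omega>) * \<pi> (X \<omega>) \<partial>M)"
  proof (rule integral_cong_AE)
    show "(\<lambda>\<omega>. g (X \<omega>) * ce \<omega>) \<in> borel_measurable M" unfolding ce_def
      by (intro borel_measurable_times measurable_compose[OF XN gN] borel_measurable_cond_exp2)
    show "(\<lambda>\<omega>. g (X \<omega>) * \<pi> (X \<omega>)) \<in> borel_measurable M"
      by (intro borel_measurable_times measurable_compose[OF XN gN] measurable_compose[OF XN piN])
    show "AE \<omega> in M. g (X \<omega>) * ce \<omega> = g (X \<omega>) * \<pi> (X \<omega>)"
      using pi_eq by eventually_elim simp
  qed
  also have "\<dots> = (\<integral>x. g x * \<pi> x \<partial>N)"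
    using integral_distr[OF XN, of "\<lambda>x. g x * \<pi> x"] distrXN by simp
  finally have main: "(\<integral>\<omega>. (\<Prod>i<l. W i \<omega> ^ m i) * z \<omega> \<partial>M) = (\<integral>x. g x * \<pi> x \<partial>N)" .
  have "(\<integral>x. g x * \<pi> x \<partial>N) = (\<integral>x. g x * \<pi> x \<partial>distr N N neg)" using distr_neg by simp
  also have "\<dots> = (\<integral>x. g (neg x) * \<pi> (neg x) \<partial>N)"
    by (rule integral_distr[OF neg_meas]) simp
  also have "\<dots> = (\<integral>x. g x - g x * \<pi> x \<partial>N)"
  proof (rule Bochner_Integration.integral_cong[OF refl])
    fix x assume "x \<in> space N"
    then have "\<pi> (neg x) = 1 - \<pi> x" using \<pi>_sym spaceN unfolding neg_app P_def by simp
    then show "g (neg x) * \<pi> (neg x) = g x - g x * \<pi> x" by (simp only: g_neg) (simp add: right_diff_distrib)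
  qed
  also have "\<dots> = integral\<^sup>L N g - (\<integral>x. g x * \<pi> x \<partial>N)"
    using g_int gpi_int by simp
  finally have "(\<integral>x. g x * \<pi> x \<partial>N) = integral\<^sup>L N g / 2" by simp
  then show ?thesis using main g_integral by simp
qed

end
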